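(* Let $f:\mathbb{F}_q^k\to\mathrm{Im}(f)$ with $|\mathrm{Im}(f)|\ge 2$, and let $d_d<d_f$ be positive integers. Suppose $n$ is an integer satisfying $q^{n-k}=\sum_{i=0}^{\lfloor (d_d-1)/2\rfloor}\binom{n}{i}(q-1)^i$. Then $r_f(k:d_d,d_f)\ge n-k+1$.
   Context: $d(\cdot,\cdot)$ is Hamming distance. For $f:\mathbb{F}_q^k\to\mathrm{Im}(f)$ and integers $0\le d_d\le d_f$, an $(f\!:d_d,d_f)$-FCC with redundancy $r$ is a systematic encoding $\mathfrak{C}_f(u)=(u,p_u)\in\mathbb{F}_q^{k+r}$ with $d(\mathfrak{C}_f(u_1),\mathfrak{C}_f(u_2))\ge d_d$ whenever $u_1\ne u_2$ and $\ge d_f$ whenever $f(u_1)\ne f(u_2)$. $r_f(k:d_d,d_f)$ is the minimum $r$ for which such a code exists. *)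

theory Defs
  imports Complex_Main
begin

text \<open>Vectors over the finite field 'a of length m are represented as lists of length m.\<close>

definition words :: "nat \<Rightarrow> ('a::finite) list set" where
  "words m = {u. length u = m}"

definition hamming_dist :: "'a list \<Rightarrow> 'a list \<Rightarrow> nat" where
  "hamming_dist xs ys = card {i. i < length xs \<and> xs ! i \<noteq> ys ! i}"

text \<open>A systematic (f : dd, df)-function-correcting code with redundancy r:
  u is encoded as u @ p u, where p u has length r.\<close>

definition is_fcc ::
  "('a::{finite,field} list \<Rightarrow> 'b) \<Rightarrow> nat \<Rightarrow> nat \<Rightarrow> nat \<Rightarrow> nat \<Rightarrow> ('a list \<Rightarrow> 'a list) \<Rightarrow> bool" where
  "is_fcc f k dd df r p \<longleftrightarrow>
     (\<forall>u \<in> words k. length (p u) = r) \<and>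
     (\<forall>u1 \<in> words k. \<forall>u2 \<in> words k. u1 \<noteq> u2 \<longrightarrow>
        hamming_dist (u1 @ p u1) (u2 @ p u2) \<ge> dd) \<and>
     (\<forall>u1 \<in> words k. \<forall>u2 \<in> words k. f u1 \<noteq> f u2 \<longrightarrow>
        hamming_dist (u1 @ p u1) (u2 @ p u2) \<ge> df)"

definition optimal_redundancy ::
  "('a::{finite,field} list \<Rightarrow> 'b) \<Rightarrow> nat \<Rightarrow> nat \<Rightarrow> nat \<Rightarrow> nat" where
  "optimal_redundancy f k dd df = (LEAST r. \<exists>p. is_fcc f k dd df r p)"

end

theory Submission imports Defs begin


lemma hd_Nil[simp]: "hamming_dist [] ys = 0"
  by (simp add: hamming_dist_def)

lemma hd_Cons[simp]: "hamming_dist (a#xs) (b#ys) = (if a = b then 0 else 1) + hamming_dist xs ys"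
proof -
  have e: "{i. i < length (a#xs) \<and> (a#xs) ! i \<noteq> (b#ys) ! i}
     = (if a = b then {} else {0}) \<union> Suc ` {i. i < length xs \<and> xs ! i \<noteq> ys ! i}" (is "?L = ?R")
  proof (rule set_eqI)
    fix i show "i \<in> ?L \<longleftrightarrow> i \<in> ?R"
      by (cases i) auto
  qed
  have f: "finite {i. i < length xs \<and> xs ! i \<noteq> ys ! i}" by simp
  show ?thesis unfolding hamming_dist_def e
    using f by (auto simp: card_image card_insert_if)
qed

lemma hd_append: "length xs = length xs' \<Longrightarrow>
  hamming_dist (xs @ ys) (xs' @ ys') = hamming_dist xs xs' + hamming_dist ys ys'"
proof (induction xs arbitrary: xs')
  case (Cons a x)
  then obtain b y' where "xs' = b # y'" "length y' = length x"
    by (cases xs') auto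
  with Cons.IH[of y'] show ?case by simp
qed simp

lemma hd_sym: "length xs = length ys \<Longrightarrow> hamming_dist xs ys = hamming_dist ys xs"
proof (induction xs arbitrary: ys)
  case (Cons a x)
  then obtain b y' where "ys = b # y'" "length y' = length x"
    by (cases ys) auto
  with Cons.IH[of y'] show ?case by simp
qed simp

lemma hd_triangle: "length x = length y \<Longrightarrow> length y = length z \<Longrightarrow>
   hamming_dist x z \<le> hamming_dist x y + hamming_dist y z"
proof (induction x arbitrary: y z)
  case (Cons a x)
  from Cons.prems obtain b y' where "y = b # y'" "length y' = length x"
    by (cases y) auto
  moreover from Cons.prems obtain c z' where "z = c # z'" "length z' = length x"
    by (cases z) auto
  moreover have "hamming_dist x z' \<le> hamming_dist x y' + hamming_dist y' z'"
    using Cons.IH[of y' z'] Cons.prems \<open>length y' = length x\<close> \<open>length z' = length x\<close> by simp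
  ultimately show ?case by (simp split: if_splits)
qed simp

lemma hd_pos: "length x = length y \<Longrightarrow> x \<noteq> y \<Longrightarrow> hamming_dist x y \<ge> 1"
proof (induction x arbitrary: y)
  case (Cons a x)
  then obtain b y' where "y = b # y'" "length y' = length x"
    by (cases y) auto
  with Cons.IH[of y'] Cons.prems show ?case by (cases "a = b") auto
qed simp

lemma hd_self[simp]: "hamming_dist xs xs = 0"
  by (induction xs) auto

lemma hd_update: "hamming_dist xs (xs[j := a]) \<le> 1"
proof (induction xs arbitrary: j)
  case (Cons x xs) thus ?case
    by (cases j) auto
qed simp

lemma hd_rep: "length u1 = length u2 \<Longrightarrow>
  hamming_dist (concat (replicate m u1)) (concat (replicate m u2)) = m * hamming_dist u1 u2"
  by (induction m) (auto simp: hd_append)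

lemma take_drop_step: "j < length x \<Longrightarrow> length x = length y \<Longrightarrow>
   take (Suc j) y @ drop (Suc j) x = (take j y @ drop j x)[j := y ! j]"
  by (rule nth_equalityI) (auto simp: nth_append nth_list_update)




definition V :: "nat \<Rightarrow> nat \<Rightarrow> nat \<Rightarrow> nat" where
  "V q m t = (\<Sum>i\<le>t. (m choose i) * q ^ i)"

lemma V_0[simp]: "V q m 0 = 1" by (simp add: V_def)

lemma V_Suc: "V q (Suc m) (Suc t) = V q m (Suc t) + q * V q m t"
proof (induction t)
  case 0 then show ?case by (simp add: V_def)
next
  case (Suc t)
  have "V q (Suc m) (Suc (Suc t)) = V q (Suc m) (Suc t) + (Suc m choose Suc (Suc t)) * q^Suc (Suc t)"
    by (simp add: V_def)
  also have "\<dots> = V q m (Suc t) + q * V q m t + ((m choose Suc (Suc t)) + (m choose Suc t)) * q^Suc (Suc t)"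
    using Suc by simp
  also have "\<dots> = (V q m (Suc t) + (m choose Suc (Suc t)) * q^Suc (Suc t)) + q * (V q m t + (m choose Suc t) * q^Suc t)"
    by (simp add: algebra_simps)
  also have "\<dots> = V q m (Suc (Suc t)) + q * V q m (Suc t)"
    by (simp add: V_def)
  finally show ?case .
qed

lemma V_mono: "V q m t \<le> V q m (Suc t)" by (simp add: V_def)

lemma V_step: "V q (Suc m) t \<le> (q+1) * V q m t"
proof (cases t)
  case (Suc t')
  have "V q (Suc m) t = V q m t + q * V q m t'" using Suc V_Suc by simp
  also have "\<dots> \<le> V q m t + q * V q m t" using V_mono[of q m t'] Suc by simp
  also have "\<dots> = (q+1) * V q m t" by (simp add: algebra_simps)
  finally show ?thesis .
qed simp

lemma V_steps: "m \<le> n \<Longrightarrow> V q n t \<le> (q+1) ^ (n - m) * V q m t"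
proof (induction n)
  case (Suc n)
  show ?case
  proof (cases "m = Suc n")
    case False
    then have "m \<le> n" using Suc by simp
    then have "V q (Suc n) t \<le> (q+1) * ((q+1) ^ (n - m) * V q m t)"
      using Suc V_step[of q n t] by (meson le_trans mult_le_mono2)
    also have "\<dots> = (q+1) ^ (Suc n - m) * V q m t" using \<open>m \<le> n\<close>
      by (simp add: Suc_diff_le algebra_simps)
    finally show ?thesis .
  qed simp
qed simp

lemma ball_card: "card {x. length x = length (c::'a::finite list) \<and> hamming_dist c x \<le> t}
   = V (card (UNIV :: 'a set) - 1) (length c) t"
proof (induction c arbitrary: t)
  case Nil
  have "{x::'a list. length x = 0 \<and> hamming_dist [] x \<le> t} = {[]}" by auto
  moreover have "V q 0 t = 1" for q by (induction t) (auto simp: V_def)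
  ultimately show ?case by simp
next
  case (Cons a c)
  let ?m = "length c"
  let ?S = "\<lambda>b. {x. length x = ?m \<and> (if a = b then 0 else 1) + hamming_dist c x \<le> t}"
  have e: "{x. length x = length (a#c) \<and> hamming_dist (a#c) x \<le> t}
     = (\<lambda>(b,x). b#x) ` (SIGMA b:UNIV. ?S b)"
  proof (rule set_eqI, rule iffI)
    fix x assume x: "x \<in> {x. length x = length (a#c) \<and> hamming_dist (a#c) x \<le> t}"
    then obtain b x' where bx: "x = b#x'" "length x' = ?m" by (cases x) auto
    show "x \<in> (\<lambda>(b,x). b#x) ` (SIGMA b:UNIV. ?S b)"
      by (rule image_eqI[of _ _ "(b,x')"]) (use x bx in auto)
  qed auto
  have inj: "inj_on (\<lambda>(b,x). b#x) (SIGMA b:UNIV. ?S b)"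
    by (auto simp: inj_on_def)
  have fin: "\<And>b. finite (?S b)"
  proof -
    fix b
    have "?S b \<subseteq> {x. set x \<subseteq> UNIV \<and> length x = ?m}" by auto
    moreover have "finite {x::'a list. set x \<subseteq> UNIV \<and> length x = ?m}"
      by (rule finite_lists_length_eq) simp
    ultimately show "finite (?S b)" by (rule finite_subset)
  qed
  have "card {x. length x = length (a#c) \<and> hamming_dist (a#c) x \<le> t} = (\<Sum>b\<in>UNIV. card (?S b))"
    unfolding e using inj fin by (simp add: card_image card_SigmaI)
  also have "\<dots> = card (?S a) + (\<Sum>b\<in>UNIV-{a}. card (?S b))"
    by (rule sum.remove) auto
  also have "\<dots> = V (card (UNIV :: 'a set) - 1) ?m t + (\<Sum>b\<in>UNIV-{a}. (if t = 0 then 0 else V (card (UNIV :: 'a set) - 1) ?m (t - 1)))"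
  proof -
    have "?S a = {x. length x = length c \<and> hamming_dist c x \<le> t}" by simp
    moreover have "\<And>b. b \<in> UNIV - {a} \<Longrightarrow> card (?S b) = (if t = 0 then 0 else V (card (UNIV :: 'a set) - 1) ?m (t - 1))"
    proof -
      fix b assume "b \<in> UNIV - {a}"
      then have "?S b = {x. length x = length c \<and> 1 + hamming_dist c x \<le> t}" by auto
      then show "card (?S b) = (if t = 0 then 0 else V (card (UNIV :: 'a set) - 1) ?m (t - 1))"
        using Cons.IH[of "t - 1"]
        by (cases t) auto
    qed
    ultimately show ?thesis using Cons.IH[of t] sum.cong[OF refl, of "UNIV-{a}" "\<lambda>b. card (?S b)"] by simp
  qed
  also have "\<dots> = V (card (UNIV :: 'a set) - 1) (length (a#c)) t"
    by (cases t) (auto simp: V_Suc card_Diff_singleton algebra_simps)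
  finally show ?case .
qed




lemma card_words: "card (words m :: ('a::finite) list set) = card (UNIV :: 'a set) ^ m"
proof -
  have "words m = {xs :: 'a list. set xs \<subseteq> UNIV \<and> length xs = m}" by (auto simp: words_def)
  then show ?thesis using card_lists_length_eq[of "UNIV::'a set" m] by simp
qed

lemma finite_words: "finite (words m :: ('a::finite) list set)"
proof -
  have "words m = {xs :: 'a list. set xs \<subseteq> UNIV \<and> length xs = m}" by (auto simp: words_def)
  then show ?thesis using finite_lists_length_eq[of "UNIV::'a set" m] by simp
qed

lemma fcc_exists:
  fixes f :: "'a::{finite,field} list \<Rightarrow> 'b"
  assumes "dd \<le> df"
  shows "\<exists>r p. is_fcc f k dd df r p"
proof -
  define p :: "'a list \<Rightarrow> 'a list" where "p u = concat (replicate df u)" for u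
  have big: "hamming_dist (u1 @ p u1) (u2 @ p u2) \<ge> df"
    if "u1 \<in> words k" "u2 \<in> words k" "u1 \<noteq> u2" for u1 u2
  proof -
    have l: "length u1 = length u2" using that by (simp add: words_def)
    have "hamming_dist (u1 @ p u1) (u2 @ p u2) = hamming_dist u1 u2 + df * hamming_dist u1 u2"
      using l by (simp add: hd_append hd_rep p_def)
    moreover have "hamming_dist u1 u2 \<ge> 1" using hd_pos[OF l] that by simp
    ultimately show ?thesis by (metis le_add2 mult_le_mono2 nat_mult_1_right order_trans)
  qed
  have "is_fcc f k dd df (df * k) p"
    unfolding is_fcc_def
  proof (intro conjI ballI impI)
    fix u :: "'a list" assume "u \<in> words k" then show "length (p u) = df * k"
      by (simp add: p_def words_def length_concat sum_list_replicate)
  next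
    fix u1 u2 :: "'a list" assume "u1 \<in> words k" "u2 \<in> words k" "u1 \<noteq> u2"
    then show "dd \<le> hamming_dist (u1 @ p u1) (u2 @ p u2)" using big assms by fastforce
  next
    fix u1 u2 :: "'a list" assume "u1 \<in> words k" "u2 \<in> words k" "f u1 \<noteq> f u2"
    then show "df \<le> hamming_dist (u1 @ p u1) (u2 @ p u2)" using big by fastforce
  qed
  then show ?thesis by blast
qed




lemma no_short_code:
  fixes f :: "'a::{finite,field} list \<Rightarrow> 'b" and p :: "'a list \<Rightarrow> 'a list"
  assumes fcc: "is_fcc f k dd df r p" and card2: "card (f ` words k) \<ge> 2"
    and dd: "0 < dd" "dd < df"
    and Veq: "card (UNIV::'a set) ^ (n - k) = V (card (UNIV::'a set) - 1) n ((dd - 1) div 2)"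
    and len: "k + r \<le> n"
  shows False
proof -
  define q where "q = card (UNIV :: 'a set)"
  define t where "t = (dd - 1) div 2"
  define N where "N = k + r"
  define C where "C u = u @ p u" for u
  have q2: "q \<ge> 2"
  proof -
    have "{0::'a, 1} \<subseteq> UNIV" by simp
    then have "card {0::'a, 1} \<le> q" unfolding q_def by (rule card_mono[OF finite_UNIV])
    then show ?thesis by simp
  qed
  have Qq: "q - 1 + 1 = q" using q2 by simp
  have plen: "\<And>u. u \<in> words k \<Longrightarrow> length (p u) = r" using fcc by (simp add: is_fcc_def)
  have Clen: "\<And>u. u \<in> words k \<Longrightarrow> length (C u) = N"
    using plen by (simp add: C_def N_def words_def)
  have dist_dd: "\<And>u v. u \<in> words k \<Longrightarrow> v \<in> words k \<Longrightarrow> u \<noteq> v \<Longrightarrow> hamming_dist (C u) (C v) \<ge> dd"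
    using fcc by (simp add: is_fcc_def C_def)
  have dist_df: "\<And>u v. u \<in> words k \<Longrightarrow> v \<in> words k \<Longrightarrow> f u \<noteq> f v \<Longrightarrow> hamming_dist (C u) (C v) \<ge> df"
    using fcc by (simp add: is_fcc_def C_def)
  have t_lt: "2 * t < dd" using dd unfolding t_def by linarith
  have t_lt2: "2 * t + 1 < df" using dd unfolding t_def by linarith
  define B where "B u = {x. length x = N \<and> hamming_dist (C u) x \<le> t}" for u
  have cardB: "\<And>u. u \<in> words k \<Longrightarrow> card (B u) = V (q - 1) N t"
    using ball_card Clen unfolding B_def q_def by metis
  have Bsub: "\<And>u. B u \<subseteq> words N" by (auto simp: B_def words_def)
  have finB: "\<And>u. finite (B u)" using Bsub finite_words finite_subset by metis
  have disj: "\<And>u v. u \<in> words k \<Longrightarrow> v \<in> words k \<Longrightarrow> u \<noteq> v \<Longrightarrow> B u \<inter> B v = {}"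
  proof (rule ccontr)
    fix u v assume uv: "u \<in> words k" "v \<in> words k" "u \<noteq> v" "B u \<inter> B v \<noteq> {}"
    then obtain x where x: "x \<in> B u" "x \<in> B v" by blast
    have "hamming_dist (C u) (C v) \<le> hamming_dist (C u) x + hamming_dist x (C v)"
      using hd_triangle[of "C u" x "C v"] x uv Clen by (simp add: B_def)
    also have "\<dots> = hamming_dist (C u) x + hamming_dist (C v) x"
      using hd_sym[of x "C v"] x uv Clen by (simp add: B_def)
    also have "\<dots> \<le> 2 * t" using x by (simp add: B_def)
    finally show False using dist_dd[OF uv(1-3)] t_lt by linarith
  qed
  have cardU: "card (\<Union>u\<in>words k. B u) = q ^ k * V (q - 1) N t"
  proof -
    have "card (\<Union>u\<in>words k. B u) = (\<Sum>u\<in>words k. card (B u))"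
      by (rule card_UN_disjoint) (use finite_words finB disj in auto)
    also have "\<dots> = (\<Sum>u\<in>(words k :: 'a list set). V (q - 1) N t)" using cardB by simp
    also have "\<dots> = card (words k :: 'a list set) * V (q - 1) N t" by simp
    also have "card (words k :: 'a list set) = q ^ k" unfolding q_def by (rule card_words)
    finally show ?thesis .
  qed
  have kN: "k \<le> N" "N \<le> n" using len by (auto simp: N_def)
  have "q ^ (n - N) * q ^ (N - k) = V (q - 1) n t"
  proof -
    have "n - k = (n - N) + (N - k)" using kN by simp
    then have "q ^ (n - N) * q ^ (N - k) = q ^ (n - k)" by (simp add: power_add)
    then show ?thesis using Veq unfolding q_def t_def by simp
  qed
  also have "\<dots> \<le> q ^ (n - N) * V (q - 1) N t" using V_steps[OF kN(2), of "q - 1" t] Qq by simp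
  finally have qV: "q ^ (N - k) \<le> V (q - 1) N t" using q2 by simp
  have "card (words N :: 'a list set) = q ^ k * q ^ (N - k)"
    using kN by (simp add: card_words q_def power_add[symmetric])
  also have "\<dots> \<le> card (\<Union>u\<in>words k. B u)" using cardU qV by simp
  finally have "card (words N :: 'a list set) \<le> card (\<Union>u\<in>words k. B u)" .
  then have cover: "(\<Union>u\<in>words k. B u) = words N"
    using Bsub finite_words by (metis UN_least card_seteq)
  define m where "m (x::'a list) = (SOME u. u \<in> words k \<and> x \<in> B u)" for x
  have m: "\<And>x::'a list. x \<in> words N \<Longrightarrow> m x \<in> words k \<and> x \<in> B (m x)"
  proof -
    fix x :: "'a list" assume "x \<in> words N"
    then obtain u where "u \<in> words k \<and> x \<in> B u" using cover by blast
    then show "m x \<in> words k \<and> x \<in> B (m x)" unfolding m_def by (rule someI)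
  qed
  have mC: "\<And>u. u \<in> words k \<Longrightarrow> m (C u) = u"
  proof (rule ccontr)
    fix u assume u: "u \<in> words k" "m (C u) \<noteq> u"
    have "C u \<in> words N" using Clen u by (simp add: words_def)
    then have mm: "m (C u) \<in> words k" "hamming_dist (C (m (C u))) (C u) \<le> t"
      using m by (auto simp: B_def)
    show False using dist_dd[OF mm(1) u(1) u(2)] mm(2) t_lt by linarith
  qed
  have step: "\<And>x y::'a list. x \<in> words N \<Longrightarrow> y \<in> words N \<Longrightarrow> hamming_dist x y \<le> 1 \<Longrightarrow> f (m x) = f (m y)"
  proof (rule ccontr)
    fix x y :: "'a list" assume xy: "x \<in> words N" "y \<in> words N" "hamming_dist x y \<le> 1" "f (m x) \<noteq> f (m y)"
    have mx: "m x \<in> words k" "hamming_dist (C (m x)) x \<le> t" "length x = N"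
      using m[OF xy(1)] by (auto simp: B_def)
    have my: "m y \<in> words k" "hamming_dist (C (m y)) y \<le> t" "length y = N"
      using m[OF xy(2)] by (auto simp: B_def)
    have l1: "length (C (m x)) = N" "length (C (m y)) = N" using Clen mx my by auto
    have a1: "hamming_dist (C (m x)) (C (m y)) \<le> hamming_dist (C (m x)) x + hamming_dist x (C (m y))"
      using hd_triangle[of "C (m x)" x "C (m y)"] l1 mx my by simp
    have a2: "hamming_dist x (C (m y)) \<le> hamming_dist x y + hamming_dist y (C (m y))"
      using hd_triangle[of x y "C (m y)"] l1 mx my by simp
    have a3: "hamming_dist y (C (m y)) = hamming_dist (C (m y)) y"
      using hd_sym[of y "C (m y)"] l1 my by simp
    have "hamming_dist (C (m x)) (C (m y)) \<le> 2 * t + 1" using a1 a2 a3 mx my xy by linarith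
    then show False using dist_df[OF mx(1) my(1) xy(4)] t_lt2 by linarith
  qed
  have const: "\<And>x y::'a list. x \<in> words N \<Longrightarrow> y \<in> words N \<Longrightarrow> f (m x) = f (m y)"
  proof -
    fix x y :: "'a list" assume xy: "x \<in> words N" "y \<in> words N"
    have "j \<le> N \<Longrightarrow> f (m x) = f (m (take j y @ drop j x))" for j
    proof (induction j)
      case 0 then show ?case by simp
    next
      case (Suc j)
      have lx: "length x = N" "length y = N" using xy by (auto simp: words_def)
      have eq: "take (Suc j) y @ drop (Suc j) x = (take j y @ drop j x)[j := y ! j]"
        using take_drop_step[of j x y] Suc.prems lx by simp
      have w: "take j y @ drop j x \<in> words N" using lx Suc.prems by (simp add: words_def)
      have w2: "(take j y @ drop j x)[j := y ! j] \<in> words N" using w by (simp add: words_def)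
      have "f (m (take j y @ drop j x)) = f (m ((take j y @ drop j x)[j := y ! j]))"
        by (rule step[OF w w2 hd_update])
      then show ?case using Suc eq by simp
    qed
    from this[of N] xy show "f (m x) = f (m y)" by (simp add: words_def)
  qed
  have "f ` words k \<subseteq> {f (m (C (replicate k 0)))}"
  proof
    fix z assume "z \<in> f ` words k"
    then obtain u where u: "u \<in> words k" "z = f u" by blast
    have r0: "replicate k 0 \<in> words k" by (simp add: words_def)
    have "C u \<in> words N" "C (replicate k 0) \<in> words N" using Clen u r0 by (auto simp: words_def)
    then have "f (m (C u)) = f (m (C (replicate k 0)))" by (rule const)
    then show "z \<in> {f (m (C (replicate k 0)))}" using mC u by simp
  qed
  then have "card (f ` words k) \<le> card {f (m (C (replicate k 0)))}" by (rule card_mono[rotated]) simp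
  then have "card (f ` words k) \<le> 1" by simp
  then show False using card2 by simp
qed




theorem corollary5:
  fixes f :: "'a::{finite,field} list \<Rightarrow> 'b"
    and k dd df n :: nat
  assumes "card (f ` words k) \<ge> 2"
    and "0 < dd" and "dd < df"
    and "(real (card (UNIV :: 'a set))) powi (int n - int k)
           = (\<Sum>i = 0..(dd - 1) div 2. real (n choose i) * (real (card (UNIV :: 'a set)) - 1) ^ i)"
  shows "int (optimal_redundancy f k dd df) \<ge> int n - int k + 1"
proof (cases "n < k")
  case True then show ?thesis by simp
next
  case False
  define q where "q = card (UNIV :: 'a set)"
  define t where "t = (dd - 1) div 2"
  have q1: "q \<ge> 1" unfolding q_def by (simp add: Suc_leI finite_UNIV_card_ge_0)
  have e1: "int n - int k = int (n - k)" using False by simp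
  have "real (q ^ (n - k)) = real q powi (int n - int k)"
    unfolding e1 by (simp add: power_int_of_nat)
  also have "\<dots> = (\<Sum>i\<le>t. real (n choose i) * (real q - 1) ^ i)"
    using assms(4) unfolding q_def t_def by (simp add: atLeast0AtMost)
  also have "\<dots> = real (V (q - 1) n t)"
    using q1 by (simp add: V_def of_nat_diff)
  finally have Veq: "q ^ (n - k) = V (q - 1) n t" by (simp only: of_nat_eq_iff)
  have ex: "\<exists>r p. is_fcc f k dd df r p" using fcc_exists assms(3) by (metis less_imp_le)
  have "\<exists>p. is_fcc f k dd df (optimal_redundancy f k dd df) p"
    unfolding optimal_redundancy_def by (rule LeastI_ex) (use ex in blast)
  then obtain p where p: "is_fcc f k dd df (optimal_redundancy f k dd df) p" by blast
  have "\<not> (k + optimal_redundancy f k dd df \<le> n)"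
  proof
    assume "k + optimal_redundancy f k dd df \<le> n"
    then show False
      using no_short_code[OF p assms(1) assms(2) assms(3), of n] Veq unfolding q_def t_def by blast
  qed
  then show ?thesis by simp
qed


end
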